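(* Let $I$ be the tridendriform ideal of $\mathcal{A}$ generated by $\{x\cdot y: x,y\in\mathcal{A}^+\}$. Then $I$ is a $(3,2)$-dendriform biideal of $(\mathcal{A},\prec,\cdot,\succ,\Delta_\leftarrow,\Delta_\rightarrow)$: it is a tridendriform ideal, $\varepsilon(I)=0$, and $\Delta_\leftarrow(I)\subseteq I\otimes\mathcal{A}+\mathcal{A}\otimes I$, $\Delta_\rightarrow(I)\subseteq I\otimes\mathcal{A}+\mathcal{A}\otimes I$.
   Context: Trees: planar rooted trees in which every internal vertex has at least two children; the root vertex hangs from a trunk edge; leaves are edges without upper vertex; $|$ is the one-leaf tree; $\mathcal A$ is the $\mathbb K$-span of all trees, $\mathcal A^+$ that of trees $\neq|$. Products: $x_0\vee\cdots\vee x_k$ ($k\ge1$) grafts trees left to right on a new root; for $x=x^{(0)}\vee\cdots\vee x^{(k)}$, $y=y^{(0)}\vee\cdots\vee y^{(l)}$: $x\prec y=x^{(0)}\vee\cdots\vee x^{(k-1)}\vee(x^{(k)}*y)$, $x\cdot y=x^{(0)}\vee\cdots\vee x^{(k-1)}\vee(x^{(k)}*y^{(0)})\vee y^{(1)}\vee\cdots\vee y^{(l)}$, $x\succ y=(x*y^{(0)})\vee y^{(1)}\vee\cdots\vee y^{(l)}$, $*=\prec+\cdot+\succ$, $|*z=z*|=z$; for $a\in\mathcal A^+$: $|\prec a=0$, $a\prec|=a$, $|\succ a=a$, $a\succ|=0$, $|\cdot a=a\cdot|=0$. $\varepsilon(|)=1$, $\varepsilon(\mathcal A^+)=0$. A tridendriform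 ideal is a subspace $J$ such that $x\ltimes y\in J$ whenever $x\in J$ or $y\in J$ (and the product is defined), for $\ltimes\in\{\prec,\cdot,\succ\}$. Admissible cuts: internal edges join two internal vertices; a cut is a nonempty set of internal edges, plus the empty and total (below the root) cuts; admissible if every root-to-leaf path meets at most one chosen edge; $P^c(t)$ the component containing the root, $G^c(t)$ the $*$-product of the cut-off trees from left to right (empty cut: $P^c=t,G^c=|$; total cut: $P^c=|,G^c=t$). For $t\ne|$: $\Delta_\leftarrow(t)=\sum G^c(t)\otimes P^c(t)$ over admissible cuts with the right-most leaf of $t$ not in $P^c(t)$, $\Delta_\rightarrow(t)$ the sum over the other admissible cuts. *)

theory Defs
  imports "HOL-Library.Poly_Mapping" "HOL-Library.List_Lexorder" "HOL-Library.Sublist"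
begin

text \<open>Leaf is the one-leaf tree (written | in the paper);
  Node ts is a root vertex with the subtrees ts grafted from left to right.\<close>

datatype tree = Leaf | Node "tree list"

fun valid :: "tree \<Rightarrow> bool" where
  "valid Leaf = True"
| "valid (Node ts) = (2 \<le> length ts \<and> (\<forall>t\<in>set ts. valid t))"

type_synonym 'k alg = "tree \<Rightarrow>\<^sub>0 'k"

definition Alg :: "('k::field) alg set" where
  "Alg = {f. Poly_Mapping.keys f \<subseteq> {t. valid t}}"

definition Aplus :: "('k::field) alg set" where
  "Aplus = {f \<in> Alg. Poly_Mapping.lookup f Leaf = 0}"

definition eps :: "('k::field) alg \<Rightarrow> 'k" where
  "eps f = Poly_Mapping.lookup f Leaf"

definition smult :: "'k::field \<Rightarrow> ('a \<Rightarrow>\<^sub>0 'k) \<Rightarrow> ('a \<Rightarrow>\<^sub>0 'k)" where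
  "smult c f = (\<Sum>t\<in>Poly_Mapping.keys f. Poly_Mapping.single t (c * Poly_Mapping.lookup f t))"

definition graft :: "tree list \<Rightarrow> ('k::field) alg \<Rightarrow> tree list \<Rightarrow> 'k alg" where
  "graft ls f rs = (\<Sum>t\<in>Poly_Mapping.keys f. Poly_Mapping.single (Node (ls @ [t] @ rs)) (Poly_Mapping.lookup f t))"

lemma size_last_less: "xs \<noteq> [] \<Longrightarrow> size (last xs) < Suc (size_list size xs)"
  using size_list_estimation'[OF last_in_set, of xs "size (last xs)" size] by simp

lemma size_hd_less: "xs \<noteq> [] \<Longrightarrow> size (hd xs) < Suc (size_list size xs)"
  using size_list_estimation'[OF hd_in_set, of xs "size (hd xs)" size] by simp

function star0 :: "tree \<Rightarrow> tree \<Rightarrow> ('k::field) alg" where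
  "star0 Leaf z = Poly_Mapping.single z 1"
| "star0 (Node xs) Leaf = Poly_Mapping.single (Node xs) 1"
| "star0 (Node xs) (Node ys) =
     (if xs = [] \<or> ys = [] then 0 else
        graft (butlast xs) (star0 (last xs) (Node ys)) []
      + graft (butlast xs) (star0 (last xs) (hd ys)) (tl ys)
      + graft [] (star0 (Node xs) (hd ys)) (tl ys))"
  by pat_completeness auto
termination
proof (relation "measure (\<lambda>(x, y). size x + size y)", goal_cases)
  case 1 show ?case by simp
next
  case (2 xs ys) then show ?case using size_last_less[of xs] by simp
next
  case (3 xs ys) then show ?case using size_last_less[of xs] size_hd_less[of ys] by simp
next
  case (4 xs ys) then show ?case using size_hd_less[of ys] by simp
qed

text \<open>x \<prec> y, x \<cdot> y, x \<succ> y on basis trees. The case (Leaf, Leaf) is not defined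
  in the paper; it is never used (see the guards in tri_ideal).\<close>

fun prec0 :: "tree \<Rightarrow> tree \<Rightarrow> ('k::field) alg" where
  "prec0 Leaf y = 0"
| "prec0 (Node xs) Leaf = Poly_Mapping.single (Node xs) 1"
| "prec0 (Node xs) (Node ys) = graft (butlast xs) (star0 (last xs) (Node ys)) []"

fun dot0 :: "tree \<Rightarrow> tree \<Rightarrow> ('k::field) alg" where
  "dot0 Leaf y = 0"
| "dot0 (Node xs) Leaf = 0"
| "dot0 (Node xs) (Node ys) = graft (butlast xs) (star0 (last xs) (hd ys)) (tl ys)"

fun succ0 :: "tree \<Rightarrow> tree \<Rightarrow> ('k::field) alg" where
  "succ0 Leaf y = Poly_Mapping.single y 1"
| "succ0 (Node xs) Leaf = 0"
| "succ0 (Node xs) (Node ys) = graft [] (star0 (Node xs) (hd ys)) (tl ys)"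

definition bil :: "(tree \<Rightarrow> tree \<Rightarrow> ('k::field) alg) \<Rightarrow> 'k alg \<Rightarrow> 'k alg \<Rightarrow> 'k alg" where
  "bil op f g = (\<Sum>a\<in>Poly_Mapping.keys f. \<Sum>b\<in>Poly_Mapping.keys g. smult (Poly_Mapping.lookup f a * Poly_Mapping.lookup g b) (op a b))"

definition prec :: "('k::field) alg \<Rightarrow> 'k alg \<Rightarrow> 'k alg" where "prec = bil prec0"
definition dot :: "('k::field) alg \<Rightarrow> 'k alg \<Rightarrow> 'k alg" where "dot = bil dot0"
definition succ :: "('k::field) alg \<Rightarrow> 'k alg \<Rightarrow> 'k alg" where "succ = bil succ0"
definition star :: "('k::field) alg \<Rightarrow> 'k alg \<Rightarrow> 'k alg" where "star = bil star0"

inductive_set lspan :: "('a \<Rightarrow>\<^sub>0 'k::field) set \<Rightarrow> ('a \<Rightarrow>\<^sub>0 'k) set" for S where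
  zero: "0 \<in> lspan S"
| step: "x \<in> S \<Longrightarrow> y \<in> lspan S \<Longrightarrow> smult c x + y \<in> lspan S"

definition subspace_of :: "('a \<Rightarrow>\<^sub>0 'k::field) set \<Rightarrow> bool" where
  "subspace_of J = (lspan J = J)"

text \<open>A tridendriform ideal: a subspace J of A such that x \<ltimes> y \<in> J whenever x \<in> J or
  y \<in> J, for all products that are defined, i.e. with one factor in A+.\<close>
definition tri_ideal :: "('k::field) alg set \<Rightarrow> bool" where
  "tri_ideal J = (J \<subseteq> Alg \<and> subspace_of J \<and>
     (\<forall>x\<in>J. \<forall>y\<in>Alg. (x \<in> Aplus \<or> y \<in> Aplus) \<longrightarrow>
        (\<forall>op\<in>{prec, dot, succ}. op x y \<in> J \<and> op y x \<in> J)))"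

definition gen_ideal :: "('k::field) alg set \<Rightarrow> 'k alg set" where
  "gen_ideal G = \<Inter>{J. tri_ideal J \<and> G \<subseteq> J}"

fun subt :: "tree \<Rightarrow> nat list \<Rightarrow> tree option" where
  "subt t [] = Some t"
| "subt Leaf (i # p) = None"
| "subt (Node ts) (i # p) = (if i < length ts then subt (ts ! i) p else None)"

fun replace_at :: "tree \<Rightarrow> nat list \<Rightarrow> tree \<Rightarrow> tree" where
  "replace_at t [] s = s"
| "replace_at Leaf (i # p) s = Leaf"
| "replace_at (Node ts) (i # p) s =
     (if i < length ts then Node (ts[i := replace_at (ts ! i) p s]) else Node ts)"

text \<open>Internal edges of t correspond to positions p \<noteq> [] of non-root internal vertices
  (the internal edge is the one just below that vertex).\<close>
definition internal_edges :: "tree \<Rightarrow> nat list set" where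
  "internal_edges t = {p. p \<noteq> [] \<and> (\<exists>ts. subt t p = Some (Node ts))}"

datatype cut = Total | Edges "nat list set"

text \<open>Edges {} is the empty cut; Total the total cut. A set of internal edges is
  admissible iff every root-to-leaf path meets at most one of them, i.e. no chosen
  edge lies above another one (no position is a proper prefix of another).\<close>
fun admissible :: "tree \<Rightarrow> cut \<Rightarrow> bool" where
  "admissible t Total = True"
| "admissible t (Edges C) = (C \<subseteq> internal_edges t \<and>
     (\<forall>p\<in>C. \<forall>q\<in>C. prefix p q \<longrightarrow> p = q))"

fun Pc :: "tree \<Rightarrow> cut \<Rightarrow> tree" where
  "Pc t Total = Leaf"
| "Pc t (Edges C) = fold (\<lambda>p s. replace_at s p Leaf) (sorted_list_of_set C) t"

text \<open>Cut-off trees from left to right (lexicographic order on positions of an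
  antichain is the planar left-to-right order), multiplied with *.\<close>
fun Gc :: "tree \<Rightarrow> cut \<Rightarrow> ('k::field) alg" where
  "Gc t Total = Poly_Mapping.single t 1"
| "Gc t (Edges C) = foldl (\<lambda>g p. star g (Poly_Mapping.single (the (subt t p)) 1))
      (Poly_Mapping.single Leaf 1) (sorted_list_of_set C)"

function rm_leaf :: "tree \<Rightarrow> nat list" where
  "rm_leaf Leaf = []"
| "rm_leaf (Node ts) = (if ts = [] then [] else (length ts - 1) # rm_leaf (last ts))"
  by pat_completeness auto
termination
proof (relation "measure size", goal_cases)
  case 1 show ?case by simp
next
  case (2 ts) then show ?case using size_last_less[of ts] by simp
qed

text \<open>The right-most leaf of t lies in P^c(t) iff no cut edge lies on the path
  from the root to it.\<close>
fun rmleaf_in_P :: "tree \<Rightarrow> cut \<Rightarrow> bool" where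
  "rmleaf_in_P t Total = False"
| "rmleaf_in_P t (Edges C) = (\<forall>p\<in>C. \<not> prefix p (rm_leaf t))"

type_synonym 'k alg2 = "(tree \<times> tree) \<Rightarrow>\<^sub>0 'k"

definition tens :: "('k::field) alg \<Rightarrow> 'k alg \<Rightarrow> 'k alg2" where
  "tens f g = (\<Sum>a\<in>Poly_Mapping.keys f. \<Sum>b\<in>Poly_Mapping.keys g. Poly_Mapping.single (a, b) (Poly_Mapping.lookup f a * Poly_Mapping.lookup g b))"

definition DeltaL0 :: "tree \<Rightarrow> ('k::field) alg2" where
  "DeltaL0 t = (if t = Leaf then 0 else
     (\<Sum>c\<in>{c. admissible t c \<and> \<not> rmleaf_in_P t c}.
        tens (Gc t c) (Poly_Mapping.single (Pc t c) 1)))"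

definition DeltaR0 :: "tree \<Rightarrow> ('k::field) alg2" where
  "DeltaR0 t = (if t = Leaf then 0 else
     (\<Sum>c\<in>{c. admissible t c \<and> rmleaf_in_P t c}.
        tens (Gc t c) (Poly_Mapping.single (Pc t c) 1)))"

definition DeltaL :: "('k::field) alg \<Rightarrow> 'k alg2" where
  "DeltaL f = (\<Sum>t\<in>Poly_Mapping.keys f. smult (Poly_Mapping.lookup f t) (DeltaL0 t))"

definition DeltaR :: "('k::field) alg \<Rightarrow> 'k alg2" where
  "DeltaR f = (\<Sum>t\<in>Poly_Mapping.keys f. smult (Poly_Mapping.lookup f t) (DeltaR0 t))"

text \<open>I \<otimes> A + A \<otimes> I as a subspace of A \<otimes> A.\<close>
definition tens_sum :: "('k::field) alg set \<Rightarrow> 'k alg2 set" where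
  "tens_sum J = lspan ({tens x y | x y. x \<in> J \<and> y \<in> Alg} \<union> {tens y x | x y. x \<in> J \<and> y \<in> Alg})"

end

theory Submission imports Defs begin

lemma lookup_smult[simp]: "Poly_Mapping.lookup (smult c f) x = c * Poly_Mapping.lookup f x"
proof -
  have "Poly_Mapping.lookup (smult c f) x =
        (\<Sum>t\<in>Poly_Mapping.keys f. (if t = x then c * Poly_Mapping.lookup f t else 0))"
    unfolding smult_def lookup_sum by (intro sum.cong) (auto simp: lookup_single when_def)
  also have "\<dots> = c * Poly_Mapping.lookup f x"
    by (cases "x \<in> Poly_Mapping.keys f") (auto simp: in_keys_iff)
  finally show ?thesis .
qed

lemma smult_one[simp]: "smult 1 f = f"
  by (rule poly_mapping_eqI) simp

lemma smult_zero[simp]: "smult c 0 = 0"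
  by (rule poly_mapping_eqI) simp

lemma smult_add: "smult c (f + g) = smult c f + smult c g"
  by (rule poly_mapping_eqI) (simp add: lookup_add algebra_simps)

lemma smult_smult: "smult c (smult d f) = smult (c * d) f"
  by (rule poly_mapping_eqI) simp

lemma keys_smult: "Poly_Mapping.keys (smult c f) \<subseteq> Poly_Mapping.keys f"
  by (auto simp: in_keys_iff)

lemma lspan_base: assumes "x \<in> S" shows "x \<in> lspan S"
proof -
  have "smult 1 x + 0 \<in> lspan S" by (rule lspan.step) (use assms in \<open>auto intro: lspan.zero\<close>)
  then show ?thesis by simp
qed

lemma lspan_add: "x \<in> lspan S \<Longrightarrow> y \<in> lspan S \<Longrightarrow> x + y \<in> lspan S"
  by (induction x rule: lspan.induct) (auto simp: add.assoc intro: lspan.step)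

lemma lspan_smult: "x \<in> lspan S \<Longrightarrow> smult c x \<in> lspan S"
  by (induction x rule: lspan.induct) (auto simp: smult_add smult_smult intro: lspan.step lspan.zero)

lemma lspan_sum: "(\<And>i. i \<in> A \<Longrightarrow> f i \<in> lspan S) \<Longrightarrow> sum f A \<in> lspan S"
  by (induction A rule: infinite_finite_induct) (auto intro: lspan.zero lspan_add)

lemma poly_expand: "f = (\<Sum>t\<in>Poly_Mapping.keys f. smult (Poly_Mapping.lookup f t) (Poly_Mapping.single t 1))"
proof (rule poly_mapping_eqI)
  fix x
  have "Poly_Mapping.lookup (\<Sum>t\<in>Poly_Mapping.keys f. smult (Poly_Mapping.lookup f t) (Poly_Mapping.single t 1)) x
     = (\<Sum>t\<in>Poly_Mapping.keys f. (if t = x then Poly_Mapping.lookup f t else 0))"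
    unfolding lookup_sum by (intro sum.cong) (auto simp: lookup_single when_def)
  also have "\<dots> = Poly_Mapping.lookup f x"
    by (cases "x \<in> Poly_Mapping.keys f") (auto simp: in_keys_iff)
  finally show "Poly_Mapping.lookup f x = Poly_Mapping.lookup (\<Sum>t\<in>Poly_Mapping.keys f. smult (Poly_Mapping.lookup f t) (Poly_Mapping.single t 1)) x" by simp
qed

lemma keys_graft: "Poly_Mapping.keys (graft ls f rs) \<subseteq> (\<lambda>s. Node (ls @ [s] @ rs)) ` Poly_Mapping.keys f"
proof -
  have "Poly_Mapping.keys (graft ls f rs) \<subseteq> (\<Union>t\<in>Poly_Mapping.keys f. Poly_Mapping.keys
     (Poly_Mapping.single (Node (ls @ [t] @ rs)) (Poly_Mapping.lookup f t)))"
    unfolding graft_def by (rule keys_sum)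
  also have "\<dots> \<subseteq> (\<lambda>s. Node (ls @ [s] @ rs)) ` Poly_Mapping.keys f"
    by (auto split: if_splits)
  finally show ?thesis .
qed

lemma graft_single: "graft ls (Poly_Mapping.single s 1) rs = Poly_Mapping.single (Node (ls @ [s] @ rs)) 1"
  unfolding graft_def by simp

lemma keys_bil: "Poly_Mapping.keys (bil op f g) \<subseteq>
   (\<Union>a\<in>Poly_Mapping.keys f. \<Union>b\<in>Poly_Mapping.keys g. Poly_Mapping.keys (op a b))"
proof -
  have "\<And>a. Poly_Mapping.keys
     (\<Sum>b\<in>Poly_Mapping.keys g. smult (Poly_Mapping.lookup f a * Poly_Mapping.lookup g b) (op a b))
     \<subseteq> (\<Union>b\<in>Poly_Mapping.keys g. Poly_Mapping.keys
     (smult (Poly_Mapping.lookup f a * Poly_Mapping.lookup g b) (op a b)))"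
    by (rule keys_sum)
  moreover have "Poly_Mapping.keys (bil op f g) \<subseteq> (\<Union>a\<in>Poly_Mapping.keys f. Poly_Mapping.keys
     (\<Sum>b\<in>Poly_Mapping.keys g. smult (Poly_Mapping.lookup f a * Poly_Mapping.lookup g b) (op a b)))"
    unfolding bil_def by (rule keys_sum)
  ultimately have "Poly_Mapping.keys (bil op f g) \<subseteq> (\<Union>a\<in>Poly_Mapping.keys f. \<Union>b\<in>Poly_Mapping.keys g. Poly_Mapping.keys
     (smult (Poly_Mapping.lookup f a * Poly_Mapping.lookup g b) (op a b)))"
    by (meson UN_mono order_refl subset_trans)
  also have "\<dots> \<subseteq> (\<Union>a\<in>Poly_Mapping.keys f. \<Union>b\<in>Poly_Mapping.keys g. Poly_Mapping.keys (op a b))"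
    by (intro UN_mono order_refl keys_smult)
  finally show ?thesis .
qed


fun nb :: "tree \<Rightarrow> bool" where
  "nb Leaf = False"
| "nb (Node ts) = (3 \<le> length ts \<or> (\<exists>t\<in>set ts. nb t))"

lemma keys_add3: "k \<in> Poly_Mapping.keys (a + b + c) \<Longrightarrow>
   k \<in> Poly_Mapping.keys a \<or> k \<in> Poly_Mapping.keys b \<or> k \<in> Poly_Mapping.keys c"
  using keys_add[of "a+b" c] keys_add[of a b] by blast

lemma graft_left:
  assumes "xs \<noteq> []" "valid (Node xs)" "t = Node (butlast xs @ [s] @ [])" "valid s"
    "nb (last xs) \<Longrightarrow> nb s"
  shows "valid t \<and> (nb (Node xs) \<or> nb s \<longrightarrow> nb t)"
proof -
  have xs: "xs = butlast xs @ [last xs]" using assms(1) by simp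
  have "length (butlast xs @ [s]) = length xs" using assms(1) by simp
  moreover have "\<forall>u\<in>set (butlast xs). valid u" using assms(2) by (auto dest: in_set_butlastD)
  moreover have "\<forall>u\<in>set xs. nb u \<longrightarrow> u \<in> set (butlast xs) \<or> nb s"
    using assms(5) by (metis xs Un_iff empty_iff empty_set list.simps(15) set_append singletonD)
  ultimately show ?thesis using assms by auto
qed

lemma graft_right:
  assumes "ys \<noteq> []" "valid (Node ys)" "t = Node ([] @ [s] @ tl ys)" "valid s"
    "nb (hd ys) \<Longrightarrow> nb s"
  shows "valid t \<and> (nb (Node ys) \<or> nb s \<longrightarrow> nb t)"
proof -
  have ys: "ys = hd ys # tl ys" using assms(1) by simp
  have "length ([s] @ tl ys) = length ys" using assms(1) by (cases ys) auto
  moreover have "\<forall>u\<in>set (tl ys). valid u" using assms(2) by (cases ys) auto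
  moreover have "\<forall>u\<in>set ys. nb u \<longrightarrow> u \<in> set (tl ys) \<or> nb s"
    using assms(5) ys by (metis set_ConsD)
  ultimately show ?thesis using assms by auto
qed

lemma graft_mid:
  assumes "xs \<noteq> []" "ys \<noteq> []" "valid (Node xs)" "valid (Node ys)"
    "t = Node (butlast xs @ [s] @ tl ys)" "valid s"
  shows "valid t \<and> nb t"
proof -
  have "length (butlast xs @ [s] @ tl ys) \<ge> 3" using assms(1-4) by (cases ys) auto
  moreover have "\<forall>u\<in>set (butlast xs). valid u" using assms(3) by (auto dest: in_set_butlastD)
  moreover have "\<forall>u\<in>set (tl ys). valid u" using assms(4) by (cases ys) auto
  ultimately show ?thesis using assms by auto
qed

lemma star0_good:
  "valid a \<Longrightarrow> valid b \<Longrightarrow> t \<in> Poly_Mapping.keys (star0 a b :: ('k::field) alg) \<Longrightarrow>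
    valid t \<and> (nb a \<or> nb b \<longrightarrow> nb t)"
proof (induction a b arbitrary: t rule: star0.induct)
  case (1 z)
  then show ?case by simp
next
  case (2 xs)
  then show ?case by simp
next
  case (3 xs ys)
  have ne: "xs \<noteq> []" "ys \<noteq> []" using "3.prems" by auto
  have vl: "valid (last xs)" using "3.prems"(1) ne by simp
  have vh: "valid (hd ys)" using "3.prems"(2) ne by simp
  from "3.prems"(3) ne consider
      (a) "t \<in> Poly_Mapping.keys (graft (butlast xs) (star0 (last xs) (Node ys) :: 'k alg) [])"
    | (b) "t \<in> Poly_Mapping.keys (graft (butlast xs) (star0 (last xs) (hd ys) :: 'k alg) (tl ys))"
    | (c) "t \<in> Poly_Mapping.keys (graft [] (star0 (Node xs) (hd ys) :: 'k alg) (tl ys))"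
    using keys_add3 by (metis star0.simps(3))
  then show ?case
  proof cases
    case a
    then obtain s where s: "s \<in> Poly_Mapping.keys (star0 (last xs) (Node ys) :: 'k alg)"
      "t = Node (butlast xs @ [s] @ [])" using keys_graft by blast
    have "valid s \<and> (nb (last xs) \<or> nb (Node ys) \<longrightarrow> nb s)"
      using "3.IH"(1)[OF _ vl "3.prems"(2) s(1)] ne by blast
    then show ?thesis using graft_left[OF ne(1) "3.prems"(1) s(2)] by blast
  next
    case b
    then obtain s where s: "s \<in> Poly_Mapping.keys (star0 (last xs) (hd ys) :: 'k alg)"
      "t = Node (butlast xs @ [s] @ tl ys)" using keys_graft by blast
    have "valid s"
      using "3.IH"(2)[OF _ vl vh s(1)] ne by blast
    then show ?thesis using graft_mid[OF ne "3.prems"(1,2) s(2)] by blast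
  next
    case c
    then obtain s where s: "s \<in> Poly_Mapping.keys (star0 (Node xs) (hd ys) :: 'k alg)"
      "t = Node ([] @ [s] @ tl ys)" using keys_graft by blast
    have "valid s \<and> (nb (Node xs) \<or> nb (hd ys) \<longrightarrow> nb s)"
      using "3.IH"(3)[OF _ "3.prems"(1) vh s(1)] ne by blast
    then show ?thesis using graft_right[OF ne(2) "3.prems"(2) s(2)] by blast
  qed
qed

lemma prec0_good:
  "valid a \<Longrightarrow> valid b \<Longrightarrow> t \<in> Poly_Mapping.keys (prec0 a b :: ('k::field) alg) \<Longrightarrow>
    valid t \<and> (nb a \<or> nb b \<longrightarrow> nb t)"
proof (cases a)
  case Leaf
  then show "t \<in> Poly_Mapping.keys (prec0 a b :: ('k::field) alg) \<Longrightarrow> ?thesis" by simp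
next
  case (Node xs)
  assume va: "valid a" and vb: "valid b" and t: "t \<in> Poly_Mapping.keys (prec0 a b :: ('k::field) alg)"
  show ?thesis
  proof (cases b)
    case Leaf
    then show ?thesis using Node va t by simp
  next
    case (Node ys)
    have ne: "xs \<noteq> []" "ys \<noteq> []" using va vb \<open>a = Node xs\<close> Node by auto
    obtain s where s: "s \<in> Poly_Mapping.keys (star0 (last xs) (Node ys) :: 'k alg)"
      "t = Node (butlast xs @ [s] @ [])" using keys_graft t \<open>a = Node xs\<close> Node by force
    have "valid s \<and> (nb (last xs) \<or> nb (Node ys) \<longrightarrow> nb s)"
      using star0_good[OF _ _ s(1)] ne va vb \<open>a = Node xs\<close> Node by simp
    then show ?thesis using graft_left[OF ne(1) _ s(2)] va \<open>a = Node xs\<close> Node by blast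
  qed
qed

lemma succ0_good:
  "valid a \<Longrightarrow> valid b \<Longrightarrow> t \<in> Poly_Mapping.keys (succ0 a b :: ('k::field) alg) \<Longrightarrow>
    valid t \<and> (nb a \<or> nb b \<longrightarrow> nb t)"
proof (cases a)
  case Leaf
  then show "valid a \<Longrightarrow> valid b \<Longrightarrow> t \<in> Poly_Mapping.keys (succ0 a b :: ('k::field) alg) \<Longrightarrow> ?thesis" by simp
next
  case (Node xs)
  assume va: "valid a" and vb: "valid b" and t: "t \<in> Poly_Mapping.keys (succ0 a b :: ('k::field) alg)"
  show ?thesis
  proof (cases b)
    case Leaf
    then show ?thesis using Node va t by simp
  next
    case (Node ys)
    have ne: "xs \<noteq> []" "ys \<noteq> []" using va vb \<open>a = Node xs\<close> Node by auto
    obtain s where s: "s \<in> Poly_Mapping.keys (star0 (Node xs) (hd ys) :: 'k alg)"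
      "t = Node ([] @ [s] @ tl ys)" using keys_graft t \<open>a = Node xs\<close> Node by force
    have "valid s \<and> (nb (Node xs) \<or> nb (hd ys) \<longrightarrow> nb s)"
      using star0_good[OF _ _ s(1)] ne va vb \<open>a = Node xs\<close> Node by simp
    then show ?thesis using graft_right[OF ne(2) _ s(2)] vb \<open>a = Node xs\<close> Node by blast
  qed
qed

lemma dot0_good:
  "valid a \<Longrightarrow> valid b \<Longrightarrow> t \<in> Poly_Mapping.keys (dot0 a b :: ('k::field) alg) \<Longrightarrow>
    valid t \<and> nb t"
proof (cases a)
  case Leaf
  then show "t \<in> Poly_Mapping.keys (dot0 a b :: ('k::field) alg) \<Longrightarrow> ?thesis" by simp
next
  case (Node xs)
  assume va: "valid a" and vb: "valid b" and t: "t \<in> Poly_Mapping.keys (dot0 a b :: ('k::field) alg)"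
  show ?thesis
  proof (cases b)
    case Leaf
    then show ?thesis using Node va t by simp
  next
    case (Node ys)
    have ne: "xs \<noteq> []" "ys \<noteq> []" using va vb \<open>a = Node xs\<close> Node by auto
    obtain s where s: "s \<in> Poly_Mapping.keys (star0 (last xs) (hd ys) :: 'k alg)"
      "t = Node (butlast xs @ [s] @ tl ys)" using keys_graft t \<open>a = Node xs\<close> Node by force
    have "valid s"
      using star0_good[OF _ _ s(1)] ne va vb \<open>a = Node xs\<close> Node by simp
    then show ?thesis using graft_mid[OF ne _ _ s(2)] va vb \<open>a = Node xs\<close> Node by blast
  qed
qed

definition NB :: "('k::field) alg set" where
  "NB = {f \<in> Alg. \<forall>t\<in>Poly_Mapping.keys f. nb t}"

lemma NB_Alg: "NB \<subseteq> Alg" unfolding NB_def by auto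

lemma NB_Aplus: "f \<in> NB \<Longrightarrow> f \<in> Aplus"
proof -
  assume f: "f \<in> NB"
  then have "Leaf \<notin> Poly_Mapping.keys f" unfolding NB_def by (metis (mono_tags, lifting) mem_Collect_eq nb.simps(1))
  then show ?thesis using f unfolding NB_def Aplus_def by (simp add: in_keys_iff)
qed

lemma single_Alg: "valid t \<Longrightarrow> Poly_Mapping.single t 1 \<in> Alg"
  unfolding Alg_def by simp

lemma single_Aplus: "valid t \<Longrightarrow> t \<noteq> Leaf \<Longrightarrow> Poly_Mapping.single t 1 \<in> Aplus"
  unfolding Aplus_def by (simp add: single_Alg lookup_single_not_eq)

lemma single_NB: "valid t \<Longrightarrow> nb t \<Longrightarrow> Poly_Mapping.single t 1 \<in> NB"
  unfolding NB_def by (simp add: single_Alg)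

lemma bil_single: "bil op (Poly_Mapping.single a 1) (Poly_Mapping.single b 1) = op a b"
  unfolding bil_def by simp

lemma bil_good:
  assumes op: "\<And>a b t. valid a \<Longrightarrow> valid b \<Longrightarrow> t \<in> Poly_Mapping.keys (op a b :: ('k::field) alg) \<Longrightarrow>
    valid t \<and> (nb a \<or> nb b \<longrightarrow> nb t)"
  and f: "f \<in> Alg" and g: "g \<in> Alg"
  shows "bil op f g \<in> Alg" "f \<in> NB \<or> g \<in> NB \<Longrightarrow> bil op f g \<in> NB"
proof -
  have k: "Poly_Mapping.keys (bil op f g) \<subseteq>
   (\<Union>a\<in>Poly_Mapping.keys f. \<Union>b\<in>Poly_Mapping.keys g. Poly_Mapping.keys (op a b))"
    by (rule keys_bil)
  show "bil op f g \<in> Alg" unfolding Alg_def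
  proof (intro CollectI subsetI)
    fix t assume "t \<in> Poly_Mapping.keys (bil op f g)"
    then obtain a b where "a \<in> Poly_Mapping.keys f" "b \<in> Poly_Mapping.keys g" "t \<in> Poly_Mapping.keys (op a b)"
      using k by blast
    then show "valid t" using op f g unfolding Alg_def by blast
  qed
  assume h: "f \<in> NB \<or> g \<in> NB"
  have "\<forall>t\<in>Poly_Mapping.keys (bil op f g). nb t"
  proof
    fix t assume "t \<in> Poly_Mapping.keys (bil op f g)"
    then obtain a b where ab: "a \<in> Poly_Mapping.keys f" "b \<in> Poly_Mapping.keys g" "t \<in> Poly_Mapping.keys (op a b)"
      using k by blast
    have "nb a \<or> nb b" using h ab unfolding NB_def by blast
    then show "nb t" using op[OF _ _ ab(3)] ab f g unfolding Alg_def by blast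
  qed
  then show "bil op f g \<in> NB" using \<open>bil op f g \<in> Alg\<close> unfolding NB_def by blast
qed

lemma dot0_good': "valid a \<Longrightarrow> valid b \<Longrightarrow> t \<in> Poly_Mapping.keys (dot0 a b :: ('k::field) alg) \<Longrightarrow>
    valid t \<and> (nb a \<or> nb b \<longrightarrow> nb t)"
  using dot0_good by blast

lemma NB_add: "f \<in> NB \<Longrightarrow> g \<in> NB \<Longrightarrow> f + g \<in> NB"
  unfolding NB_def Alg_def using keys_add[of f g] by blast

lemma NB_smult: "f \<in> NB \<Longrightarrow> smult c f \<in> NB"
  unfolding NB_def Alg_def using keys_smult[of c f] by blast

lemma NB_zero: "0 \<in> NB" unfolding NB_def Alg_def by simp

lemma lspan_NB: "lspan NB = NB"
proof
  show "lspan NB \<subseteq> NB"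
  proof
    fix x assume "x \<in> lspan NB" then show "x \<in> NB"
      by (induction x rule: lspan.induct) (auto intro: NB_zero NB_add NB_smult)
  qed
  show "NB \<subseteq> lspan NB" using lspan_base by blast
qed

lemma NB_ops:
  fixes x y :: "('k::field) alg" and op :: "'k alg \<Rightarrow> 'k alg \<Rightarrow> 'k alg"
  assumes x: "x \<in> NB" and y: "y \<in> Alg" and op: "op \<in> {prec, dot, succ}"
  shows "op x y \<in> NB \<and> op y x \<in> NB"
proof -
  have xa: "x \<in> Alg" using x NB_Alg by blast
  have "op = prec \<or> op = dot \<or> op = succ" using op by simp
  moreover have "prec x y \<in> NB"
    unfolding prec_def by (rule bil_good(2)[OF prec0_good xa y disjI1[OF x]])
  moreover have "prec y x \<in> NB"
    unfolding prec_def by (rule bil_good(2)[OF prec0_good y xa disjI2[OF x]])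
  moreover have "dot x y \<in> NB"
    unfolding dot_def by (rule bil_good(2)[OF dot0_good' xa y disjI1[OF x]])
  moreover have "dot y x \<in> NB"
    unfolding dot_def by (rule bil_good(2)[OF dot0_good' y xa disjI2[OF x]])
  moreover have "succ x y \<in> NB"
    unfolding succ_def by (rule bil_good(2)[OF succ0_good xa y disjI1[OF x]])
  moreover have "succ y x \<in> NB"
    unfolding succ_def by (rule bil_good(2)[OF succ0_good y xa disjI2[OF x]])
  ultimately show "op x y \<in> NB \<and> op y x \<in> NB" by auto
qed

lemma tri_ideal_NB: "tri_ideal (NB :: ('k::field) alg set)"
proof -
  have A: "\<forall>x\<in>(NB :: 'k alg set). \<forall>y\<in>Alg. (x \<in> Aplus \<or> y \<in> Aplus) \<longrightarrow>
        (\<forall>op\<in>{prec, dot, succ}. op x y \<in> NB \<and> op y x \<in> NB)"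
  proof (intro ballI impI)
    fix x y :: "'k alg" and op :: "'k alg \<Rightarrow> 'k alg \<Rightarrow> 'k alg"
    assume x: "x \<in> NB" and y: "y \<in> Alg" and op: "op \<in> {prec, dot, succ}"
    show "op x y \<in> NB \<and> op y x \<in> NB" by (rule NB_ops[OF x y op])
  qed
  show ?thesis unfolding tri_ideal_def subspace_of_def by (intro conjI NB_Alg lspan_NB A)
qed

lemma star0_Leaf: "star0 t Leaf = Poly_Mapping.single t 1"
  by (cases t) simp_all

lemma len3: "3 \<le> length xs \<Longrightarrow> \<exists>a b c r. xs = a # b # c # r"
  by (cases xs; cases "tl xs"; cases "tl (tl xs)") auto

lemma len2: "length xs = 2 \<Longrightarrow> \<exists>a b. xs = [a, b]"
  by (cases xs; cases "tl xs"; cases "tl (tl xs)") auto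

lemma single_in_J:
  fixes J :: "('k::field) alg set"
  assumes J: "tri_ideal J" and G: "{dot x y | x y. x \<in> Aplus \<and> y \<in> Aplus} \<subseteq> J"
  shows "valid t \<Longrightarrow> nb t \<Longrightarrow> Poly_Mapping.single t 1 \<in> J"
proof (induction t)
  case Leaf
  then show ?case by simp
next
  case (Node ts)
  have cl: "\<And>x y. x \<in> J \<Longrightarrow> y \<in> Alg \<Longrightarrow> x \<in> Aplus \<Longrightarrow> succ x y \<in> J \<and> prec y x \<in> J"
  proof -
    fix x y :: "'k alg" assume x: "x \<in> J" and y: "y \<in> Alg" and xa: "x \<in> Aplus"
    have "\<forall>x\<in>J. \<forall>y\<in>Alg. (x \<in> Aplus \<or> y \<in> Aplus) \<longrightarrow>
        (\<forall>op\<in>{prec, dot, succ}. op x y \<in> J \<and> op y x \<in> J)"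
      using J unfolding tri_ideal_def by (elim conjE)
    then have "\<forall>op\<in>{prec, dot, succ}. op x y \<in> J \<and> op y x \<in> J" using x y xa by blast
    then show "succ x y \<in> J \<and> prec y x \<in> J" by simp
  qed
  have vts: "\<forall>u\<in>set ts. valid u" "2 \<le> length ts" using Node.prems by auto
  show ?case
  proof (cases "3 \<le> length ts")
    case True
    have "\<exists>t0 t1 t2 rest. ts = t0 # t1 # t2 # rest"
      using True by (rule len3)
    then obtain t0 t1 t2 rest where ts: "ts = t0 # t1 # t2 # rest" by blast
    have e: "dot (Poly_Mapping.single (Node [t0, t1]) 1) (Poly_Mapping.single (Node (Leaf # t2 # rest)) 1)
        = (Poly_Mapping.single (Node ts) 1 :: 'k alg)"
      unfolding dot_def bil_single by (simp add: ts star0_Leaf graft_single)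
    have v: "valid (Node [t0, t1])" "valid (Node (Leaf # t2 # rest))"
      using vts(1) unfolding ts by simp_all
    have "Poly_Mapping.single (Node [t0, t1]) 1 \<in> (Aplus :: 'k alg set)"
      "Poly_Mapping.single (Node (Leaf # t2 # rest)) 1 \<in> (Aplus :: 'k alg set)"
      using v by (simp_all add: single_Aplus)
    then have "dot (Poly_Mapping.single (Node [t0, t1]) 1) (Poly_Mapping.single (Node (Leaf # t2 # rest)) 1)
       \<in> {dot x y | x y. x \<in> (Aplus :: 'k alg set) \<and> y \<in> Aplus}" by blast
    then show ?thesis using G e by (simp add: subset_iff)
  next
    case False
    then have "length ts = 2" using vts(2) by simp
    then have "\<exists>a b. ts = [a, b]" by (rule len2)
    then obtain a b where ts: "ts = [a, b]" by blast
    have "nb a \<or> nb b" using Node.prems False ts by auto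
    then show ?thesis
    proof
      assume na: "nb a"
      then obtain as where a: "a = Node as" by (cases a) auto
      have "Poly_Mapping.single a 1 \<in> J" using Node.IH[of a] na vts ts by simp
      moreover have v: "valid a" "valid (Node [Leaf, b])" using vts(1) unfolding ts by simp_all
      have "Poly_Mapping.single a 1 \<in> (Aplus :: 'k alg set)" "Poly_Mapping.single (Node [Leaf, b]) 1 \<in> (Alg :: 'k alg set)"
        using v by (simp_all add: single_Aplus single_Alg a)
      ultimately have "succ (Poly_Mapping.single a 1) (Poly_Mapping.single (Node [Leaf, b]) 1) \<in> J"
        using cl by blast
      moreover have "succ (Poly_Mapping.single a 1) (Poly_Mapping.single (Node [Leaf, b]) 1)
          = (Poly_Mapping.single (Node ts) 1 :: 'k alg)"
        unfolding succ_def bil_single by (simp add: ts a graft_single)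
      ultimately show ?thesis by simp
    next
      assume nb': "nb b"
      then obtain bs where b: "b = Node bs" by (cases b) auto
      have "Poly_Mapping.single b 1 \<in> J" using Node.IH[of b] nb' vts ts by simp
      moreover have v: "valid b" "valid (Node [a, Leaf])" using vts(1) unfolding ts by simp_all
      have "Poly_Mapping.single b 1 \<in> (Aplus :: 'k alg set)" "Poly_Mapping.single (Node [a, Leaf]) 1 \<in> (Alg :: 'k alg set)"
        using v by (simp_all add: single_Aplus single_Alg b)
      ultimately have "prec (Poly_Mapping.single (Node [a, Leaf]) 1) (Poly_Mapping.single b 1) \<in> J"
        using cl by blast
      moreover have "prec (Poly_Mapping.single (Node [a, Leaf]) 1) (Poly_Mapping.single b 1)
          = (Poly_Mapping.single (Node ts) 1 :: 'k alg)"
        unfolding prec_def bil_single by (simp add: ts b graft_single)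
      ultimately show ?thesis by simp
    qed
  qed
qed

lemma NB_sub_J:
  assumes J: "tri_ideal J" and G: "{dot x y | x y. x \<in> Aplus \<and> y \<in> Aplus} \<subseteq> J"
  shows "NB \<subseteq> J"
proof
  fix f :: "'a alg" assume f: "f \<in> NB"
  have LJ: "lspan J = J" using J unfolding tri_ideal_def subspace_of_def by blast
  have "(\<Sum>t\<in>Poly_Mapping.keys f. smult (Poly_Mapping.lookup f t) (Poly_Mapping.single t 1)) \<in> lspan J"
  proof (rule lspan_sum)
    fix t assume t: "t \<in> Poly_Mapping.keys f"
    have "valid t" "nb t" using f t unfolding NB_def Alg_def by auto
    then have "Poly_Mapping.single t 1 \<in> J" by (rule single_in_J[OF J G])
    then show "smult (Poly_Mapping.lookup f t) (Poly_Mapping.single t 1) \<in> lspan J"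
      by (intro lspan_smult lspan_base)
  qed
  then show "f \<in> J" using poly_expand[of f] LJ by simp
qed

lemma G_NB: "{dot x y | x y. x \<in> Aplus \<and> y \<in> Aplus} \<subseteq> (NB :: ('k::field) alg set)"
proof safe
  fix x y :: "'k alg" assume x: "x \<in> Aplus" and y: "y \<in> Aplus"
  have xa: "x \<in> Alg" "y \<in> Alg" using x y unfolding Aplus_def by auto
  have "\<forall>t\<in>Poly_Mapping.keys (dot x y). nb t"
  proof
    fix t assume "t \<in> Poly_Mapping.keys (dot x y)"
    then obtain a b where ab: "a \<in> Poly_Mapping.keys x" "b \<in> Poly_Mapping.keys y" "t \<in> Poly_Mapping.keys (dot0 a b :: 'k alg)"
      using keys_bil[of dot0 x y] unfolding dot_def by blast
    then show "nb t" using dot0_good[OF _ _ ab(3)] xa unfolding Alg_def by blast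
  qed
  then show "dot x y \<in> NB" using bil_good(1)[OF dot0_good' xa] unfolding NB_def dot_def by blast
qed

lemma I_eq: "gen_ideal {dot x y | x y. x \<in> Aplus \<and> y \<in> Aplus} = (NB :: ('k::field) alg set)"
  unfolding gen_ideal_def
proof
  show "\<Inter> {J. tri_ideal J \<and> {dot x y |x y. x \<in> Aplus \<and> y \<in> Aplus} \<subseteq> J} \<subseteq> (NB :: 'k alg set)"
    using tri_ideal_NB G_NB by blast
  show "(NB :: 'k alg set) \<subseteq> \<Inter> {J. tri_ideal J \<and> {dot x y |x y. x \<in> Aplus \<and> y \<in> Aplus} \<subseteq> J}"
    using NB_sub_J by blast
qed

section \<open>Cuts\<close>

lemma valid_subt: "valid t \<Longrightarrow> subt t p = Some s \<Longrightarrow> valid s"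
proof (induction p arbitrary: t)
  case Nil then show ?case by simp
next
  case (Cons i p)
  show ?case
  proof (cases t)
    case Leaf then show ?thesis using Cons by simp
  next
    case (Node ts)
    have i: "i < length ts" "subt (ts ! i) p = Some s" using Cons.prems(2) Node by (simp_all split: if_splits)
    have "ts ! i \<in> set ts" using i(1) by (rule nth_mem)
    then have "valid (ts ! i)" using Cons.prems(1) Node by simp
    then show ?thesis by (rule Cons.IH[OF _ i(2)])
  qed
qed

lemma valid_replace: "valid t \<Longrightarrow> valid (replace_at t p Leaf)"
proof (induction p arbitrary: t)
  case Nil then show ?case by simp
next
  case (Cons i p)
  show ?case
  proof (cases t)
    case Leaf then show ?thesis by simp
  next
    case (Node ts)
    have "\<forall>u\<in>set (ts[i := replace_at (ts ! i) p Leaf]). valid u" if "i < length ts"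
    proof
      fix u assume "u \<in> set (ts[i := replace_at (ts ! i) p Leaf])"
      then have u: "u \<in> insert (replace_at (ts ! i) p Leaf) (set ts)" by (rule subsetD[OF set_update_subset_insert])
      have "ts ! i \<in> set ts" using that by (rule nth_mem)
      then have "valid (ts ! i)" using Cons.prems(1) Node by simp
      then have "valid (replace_at (ts ! i) p Leaf)" by (rule Cons.IH)
      then show "valid u" using u Cons.prems Node by auto
    qed
    then show ?thesis using Cons.prems Node by simp
  qed
qed

lemma nb_replace: "subt t p = Some u \<Longrightarrow> \<not> nb u \<Longrightarrow> nb t \<Longrightarrow> nb (replace_at t p Leaf)"
proof (induction p arbitrary: t)
  case Nil then show ?case by simp
next
  case (Cons i p)
  show ?case
  proof (cases t)
    case Leaf then show ?thesis using Cons by simp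
  next
    case (Node ts)
    have i: "i < length ts" and s: "subt (ts ! i) p = Some u" using Cons.prems Node by (auto split: if_splits)
    define r where "r = replace_at (ts ! i) p Leaf"
    have eq: "replace_at t (i # p) Leaf = Node (ts[i := r])" using Node i r_def by simp
    from Cons.prems(3) Node have "3 \<le> length ts \<or> (\<exists>j<length ts. nb (ts ! j))"
      by (auto simp: in_set_conv_nth)
    then show ?thesis
    proof
      assume "3 \<le> length ts" then show ?thesis using eq by simp
    next
      assume "\<exists>j<length ts. nb (ts ! j)"
      then obtain j where j: "j < length ts" "nb (ts ! j)" by blast
      show ?thesis
      proof (cases "j = i")
        case True
        then have "nb r" using Cons.IH[OF s Cons.prems(2)] j r_def by simp
        moreover have "r \<in> set (ts[i := r])" using i by (simp add: set_update_memI)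
        ultimately show ?thesis using eq by auto
      next
        case False
        then have "ts[i := r] ! j = ts ! j" by simp
        then have "ts ! j \<in> set (ts[i := r])" using j by (metis length_list_update nth_mem)
        then show ?thesis using eq j by auto
      qed
    qed
  qed
qed

lemma subt_replace_other:
  "\<not> prefix q p \<Longrightarrow> \<not> prefix p q \<Longrightarrow> subt (replace_at t p s) q = subt t q"
proof (induction q arbitrary: t p)
  case Nil then show ?case by simp
next
  case (Cons j q)
  then obtain i p' where p: "p = i # p'" by (cases p) auto
  show ?case
  proof (cases t)
    case Leaf then show ?thesis using p by simp
  next
    case (Node ts)
    show ?thesis
    proof (cases "i < length ts")
      case False then show ?thesis using p Node by simp
    next
      case True
      show ?thesis
      proof (cases "j = i")
        case True': True
        then have "\<not> prefix q p'" "\<not> prefix p' q" using Cons.prems p by auto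
        then show ?thesis using Cons.IH p Node True True' by simp
      next
        case False
        then show ?thesis using p Node True by simp
      qed
    qed
  qed
qed

lemma fold_valid: "valid t \<Longrightarrow> valid (fold (\<lambda>p s. replace_at s p Leaf) L t)"
  by (induction L arbitrary: t) (auto intro: valid_replace)

lemma fold_nb:
  "distinct L \<Longrightarrow> (\<forall>p\<in>set L. \<forall>q\<in>set L. prefix p q \<longrightarrow> p = q) \<Longrightarrow>
   (\<forall>p\<in>set L. \<exists>u. subt t p = Some u \<and> \<not> nb u) \<Longrightarrow> nb t \<Longrightarrow>
   nb (fold (\<lambda>p s. replace_at s p Leaf) L t)"
proof (induction L arbitrary: t)
  case Nil then show ?case by simp
next
  case (Cons p L)
  obtain u where u: "subt t p = Some u" "\<not> nb u" using Cons.prems(3) by auto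
  define t' where "t' = replace_at t p Leaf"
  have "nb t'" using nb_replace[OF u Cons.prems(4)] t'_def by simp
  moreover have "\<forall>q\<in>set L. \<exists>u. subt t' q = Some u \<and> \<not> nb u"
  proof
    fix q assume q: "q \<in> set L"
    then have "q \<noteq> p" using Cons.prems(1) by auto
    then have "\<not> prefix q p" "\<not> prefix p q" using Cons.prems(2) q by auto
    then have "subt t' q = subt t q" unfolding t'_def by (rule subt_replace_other)
    then show "\<exists>u. subt t' q = Some u \<and> \<not> nb u" using Cons.prems(3) q by auto
  qed
  ultimately have "nb (fold (\<lambda>p s. replace_at s p Leaf) L t')"
    using Cons.IH Cons.prems(1,2) by simp
  then show ?case using t'_def by simp
qed

lemma star_Alg: "f \<in> Alg \<Longrightarrow> g \<in> Alg \<Longrightarrow> star f g \<in> (Alg :: ('k::field) alg set)"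
  unfolding star_def by (rule bil_good(1)[OF star0_good])

lemma star_NB: "f \<in> Alg \<Longrightarrow> g \<in> Alg \<Longrightarrow> f \<in> NB \<or> g \<in> NB \<Longrightarrow> star f g \<in> (NB :: ('k::field) alg set)"
  unfolding star_def by (rule bil_good(2)[OF star0_good])

lemma foldl_Alg:
  "g0 \<in> Alg \<Longrightarrow> (\<forall>p\<in>set L. h p \<in> Alg) \<Longrightarrow> foldl (\<lambda>g p. star g (h p)) g0 L \<in> (Alg :: ('k::field) alg set)"
  by (induction L arbitrary: g0) (auto intro: star_Alg)

lemma foldl_NB:
  "g0 \<in> Alg \<Longrightarrow> (\<forall>p\<in>set L. h p \<in> Alg) \<Longrightarrow> g0 \<in> NB \<or> (\<exists>p\<in>set L. h p \<in> NB) \<Longrightarrow>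
   foldl (\<lambda>g p. star g (h p)) g0 L \<in> (NB :: ('k::field) alg set)"
proof (induction L arbitrary: g0)
  case Nil then show ?case by simp
next
  case (Cons p L)
  have a: "star g0 (h p) \<in> Alg" using Cons.prems by (auto intro: star_Alg)
  show ?case
  proof (cases "g0 \<in> NB \<or> h p \<in> NB")
    case True
    then have "star g0 (h p) \<in> NB" using Cons.prems by (auto intro: star_NB)
    then show ?thesis using Cons.IH[OF a] Cons.prems by simp
  next
    case False
    then have "\<exists>q\<in>set L. h q \<in> NB" using Cons.prems(3) by auto
    then show ?thesis using Cons.IH[OF a] Cons.prems by simp
  qed
qed

lemma set_sorted_sub: "set (sorted_list_of_set C) \<subseteq> C"
  by (cases "finite C") (auto simp: sorted_list_of_set.fold_insort_key.infinite)

lemma cut_good: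
  assumes vt: "valid t" and nt: "nb t" and adm: "admissible t c"
  shows "(Gc t c \<in> (NB :: ('k::field) alg set) \<and> Poly_Mapping.single (Pc t c) 1 \<in> (Alg :: 'k alg set)) \<or>
         (Gc t c \<in> (Alg :: 'k alg set) \<and> Poly_Mapping.single (Pc t c) 1 \<in> (NB :: 'k alg set))"
proof (cases c)
  case Total
  have "Poly_Mapping.single Leaf 1 \<in> (Alg :: 'k alg set)" by (rule single_Alg) simp
  moreover have "Poly_Mapping.single t 1 \<in> (NB :: 'k alg set)" by (rule single_NB[OF vt nt])
  ultimately show ?thesis using Total by simp
next
  case (Edges C)
  define L where "L = sorted_list_of_set C"
  define h where "h p = (Poly_Mapping.single (the (subt t p)) 1 :: 'k alg)" for p
  have LC: "set L \<subseteq> C" unfolding L_def by (rule set_sorted_sub)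
  have Cint: "C \<subseteq> internal_edges t" and anti: "\<forall>p\<in>C. \<forall>q\<in>C. prefix p q \<longrightarrow> p = q"
    using adm Edges by auto
  have sub: "\<exists>u. subt t p = Some u \<and> valid u" if pL: "p \<in> set L" for p
  proof -
    obtain ts where "subt t p = Some (Node ts)" using Cint LC pL unfolding internal_edges_def by blast
    then show ?thesis using valid_subt[OF vt] by blast
  qed
  have hA: "\<forall>p\<in>set L. h p \<in> Alg" unfolding h_def using sub single_Alg by force
  have G: "Gc t c = foldl (\<lambda>g p. star g (h p)) (Poly_Mapping.single Leaf 1) L"
    using Edges unfolding L_def h_def by simp
  have P: "Pc t c = fold (\<lambda>p s. replace_at s p Leaf) L t"
    using Edges unfolding L_def by simp
  have l0: "Poly_Mapping.single Leaf 1 \<in> (Alg :: 'k alg set)" by (rule single_Alg) simp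
  have vP: "valid (Pc t c)" using P fold_valid[OF vt] by simp
  show ?thesis
  proof (cases "\<exists>p\<in>set L. nb (the (subt t p))")
    case True
    then obtain p where p: "p \<in> set L" "nb (the (subt t p))" by blast
    obtain u where u: "subt t p = Some u" "valid u" using sub[OF p(1)] by blast
    then have "h p \<in> NB" unfolding h_def using p(2) by (simp add: single_NB)
    then have "\<exists>p\<in>set L. h p \<in> NB" using p(1) by blast
    then have "(Gc t c :: 'k alg) \<in> NB" using G foldl_NB[OF l0 hA] by simp
    then show ?thesis using vP single_Alg by blast
  next
    case False
    have "nb (Pc t c)" unfolding P
    proof (rule fold_nb[OF _ _ _ nt])
      show "distinct L" unfolding L_def by simp
      show "\<forall>p\<in>set L. \<forall>q\<in>set L. prefix p q \<longrightarrow> p = q" using anti LC by blast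
      show "\<forall>p\<in>set L. \<exists>u. subt t p = Some u \<and> \<not> nb u" using False sub by fastforce
    qed
    moreover have "(Gc t c :: 'k alg) \<in> Alg" using G foldl_Alg[OF l0 hA] by simp
    ultimately show ?thesis using vP single_NB by blast
  qed
qed

lemma tens_in:
  assumes "valid t" "nb t" "admissible t c"
  shows "tens (Gc t c) (Poly_Mapping.single (Pc t c) 1) \<in> lspan ({tens x y |x y. x \<in> (NB :: ('k::field) alg set) \<and> y \<in> Alg} \<union>
                {tens y x |x y. x \<in> NB \<and> y \<in> Alg})"
  by (rule lspan_base) (use cut_good[OF assms, where 'k='k] in blast)

lemma DeltaL0_in: "valid t \<Longrightarrow> nb t \<Longrightarrow> DeltaL0 t \<in> tens_sum (NB :: ('k::field) alg set)"
  unfolding DeltaL0_def by (auto intro!: lspan_sum tens_in simp: tens_sum_def)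

lemma DeltaR0_in: "valid t \<Longrightarrow> nb t \<Longrightarrow> DeltaR0 t \<in> tens_sum (NB :: ('k::field) alg set)"
  unfolding DeltaR0_def by (auto intro!: lspan_sum tens_in simp: tens_sum_def)

lemma DeltaL_in: "f \<in> NB \<Longrightarrow> DeltaL f \<in> tens_sum (NB :: ('k::field) alg set)"
  unfolding DeltaL_def
proof -
  assume f: "f \<in> NB"
  show "(\<Sum>t\<in>Poly_Mapping.keys f. smult (Poly_Mapping.lookup f t) (DeltaL0 t)) \<in> tens_sum NB"
    unfolding tens_sum_def
  proof (rule lspan_sum)
    fix t assume t: "t \<in> Poly_Mapping.keys f"
    have "valid t" "nb t" using f t unfolding NB_def Alg_def by auto
    then have "DeltaL0 t \<in> tens_sum (NB :: 'k alg set)" by (rule DeltaL0_in)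
    then show "smult (Poly_Mapping.lookup f t) (DeltaL0 t) \<in> lspan ({tens x y |x y. x \<in> (NB :: 'k alg set) \<and> y \<in> Alg} \<union>
                {tens y x |x y. x \<in> NB \<and> y \<in> Alg})"
      unfolding tens_sum_def by (rule lspan_smult)
  qed
qed

lemma DeltaR_in: "f \<in> NB \<Longrightarrow> DeltaR f \<in> tens_sum (NB :: ('k::field) alg set)"
  unfolding DeltaR_def
proof -
  assume f: "f \<in> NB"
  show "(\<Sum>t\<in>Poly_Mapping.keys f. smult (Poly_Mapping.lookup f t) (DeltaR0 t)) \<in> tens_sum NB"
    unfolding tens_sum_def
  proof (rule lspan_sum)
    fix t assume t: "t \<in> Poly_Mapping.keys f"
    have "valid t" "nb t" using f t unfolding NB_def Alg_def by auto
    then have "DeltaR0 t \<in> tens_sum (NB :: 'k alg set)" by (rule DeltaR0_in)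
    then show "smult (Poly_Mapping.lookup f t) (DeltaR0 t) \<in> lspan ({tens x y |x y. x \<in> (NB :: 'k alg set) \<and> y \<in> Alg} \<union>
                {tens y x |x y. x \<in> NB \<and> y \<in> Alg})"
      unfolding tens_sum_def by (rule lspan_smult)
  qed
qed

theorem mainTheorem17:
  fixes I :: "('k::field) alg set"
  defines "I \<equiv> gen_ideal {dot x y | x y. x \<in> Aplus \<and> y \<in> Aplus}"
  shows "tri_ideal I \<and> (\<forall>f\<in>I. eps f = 0) \<and>
         DeltaL ` I \<subseteq> tens_sum I \<and> DeltaR ` I \<subseteq> tens_sum I"
proof -
  have I: "I = NB" unfolding I_def by (rule I_eq)
  have e: "\<forall>f\<in>I. eps f = 0"
    using NB_Aplus unfolding I eps_def Aplus_def by blast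
  have l: "DeltaL ` I \<subseteq> tens_sum I" unfolding I using DeltaL_in by blast
  have r: "DeltaR ` I \<subseteq> tens_sum I" unfolding I using DeltaR_in by blast
  show ?thesis using tri_ideal_NB e l r unfolding I by blast
qed

end
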